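(* Let $(E,C)$ be a finite bipartite separated graph with $\mathcal H(F_\infty,D^\infty)=\{\emptyset,F_\infty^0\}$. Then for every $v\in F_\infty^0$ there is at most one $X\in D^\infty_v$ with $|X|>1$.
   Context: Separated graph $(E,C)$: $E=(E^0,E^1,r,s)$, $C=\bigsqcup_vC_v$ with $C_v$ a partition of $r^{-1}(v)$ into non-empty sets. Finite bipartite: $E$ finite, $E^0=E^{0,0}\sqcup E^{0,1}$, $s(E^1)=E^{0,1}$, $r(E^1)=E^{0,0}$. Write $C_u=\{X^u_1,\dots,X^u_{k_u}\}$. $(E_1,C^1)$: $E_1^{0,0}=E^{0,1}$, $E_1^{0,1}=\{v(x_1,\dots,x_{k_u}):u\in E^{0,0},x_j\in X^u_j\}$, edges $\alpha^{x_i}(x_1,\dots,\widehat{x_i},\dots,x_{k_u})$ with range $s(x_i)$ and source $v(x_1,\dots,x_{k_u})$, $C^1_v=\{X(x):x\in s^{-1}(v)\}$ with $X(x_i)=\{\alpha^{x_i}(x_1,\dots,\widehat{x_i},\dots,x_{k_u}):x_j\in X^u_j,j\ne i\}$. Inductively $(E_{n+1},C^{n+1})=((E_n)_1,(C^n)^1)$, $(E_0,C^0)=(E,C)$, and $(F_\infty,D^\infty)=\bigcup_n(E_n,C^n)$ glued along $E_n^{0,1}=E_{n+1}^{0,0}$ (so $D^\infty_v=C^n_v$ for $v\in E_n^{0,0}$). For a separated graph $(F,D)$, $H\subseteq F^0$ is hereditary if $r(e)\in H\Rightarrow s(e)\in H$, and $D$-saturated if $s(X)\subseteq H$ for some $X\in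 D_v$ implies $v\in H$; $\mathcal H(F,D)$ is the set of hereditary $D$-saturated subsets. *)

theory Defs
  imports Main "HOL-Library.FSet"
begin

record 'a sgraph =
  verts :: "'a set"
  edges :: "'a set"
  rng   :: "'a \<Rightarrow> 'a"
  src   :: "'a \<Rightarrow> 'a"
  sepn  :: "'a \<Rightarrow> 'a set set"

definition hereditary :: "'a sgraph \<Rightarrow> 'a set \<Rightarrow> bool" where
  "hereditary G H \<longleftrightarrow> H \<subseteq> verts G \<and>
     (\<forall>e\<in>edges G. rng G e \<in> H \<longrightarrow> src G e \<in> H)"

definition saturated :: "'a sgraph \<Rightarrow> 'a set \<Rightarrow> bool" where
  "saturated G H \<longleftrightarrow>
     (\<forall>v\<in>verts G. \<forall>X\<in>sepn G v. src G ` X \<subseteq> H \<longrightarrow> v \<in> H)"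

definition HS :: "'a sgraph \<Rightarrow> 'a set set" where
  "HS G = {H. H \<subseteq> verts G \<and> hereditary G H \<and> saturated G H}"

definition fin_bipartite_sep_graph ::
  "'v set \<Rightarrow> 'v set \<Rightarrow> 'e set \<Rightarrow> ('e \<Rightarrow> 'v) \<Rightarrow> ('e \<Rightarrow> 'v) \<Rightarrow> ('v \<Rightarrow> 'e set set) \<Rightarrow> bool"
  where
  "fin_bipartite_sep_graph V00 V01 Ed r s C \<longleftrightarrow>
     finite V00 \<and> finite V01 \<and> finite Ed \<and> V00 \<inter> V01 = {} \<and>
     r ` Ed = V00 \<and> s ` Ed = V01 \<and>
     (\<forall>v\<in>V00 \<union> V01.
        (\<forall>X\<in>C v. X \<noteq> {}) \<and>
        \<Union>(C v) = {e\<in>Ed. r e = v} \<and>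
        (\<forall>X\<in>C v. \<forall>Y\<in>C v. X \<noteq> Y \<longrightarrow> X \<inter> Y = {}))"

text \<open>Universe of names: base vertices/edges, vertices v(x_1,...,x_k) attached to
  u (represented by u and the finite set {x_1,...,x_k} of chosen edges, one from each
  member of C_u), and edges alpha^{x}(...) represented by (source vertex, x).\<close>
datatype ('v,'e) obj = V0 'v | E0 'e | Vx "('v,'e) obj" "('v,'e) obj fset"
  | Ex "('v,'e) obj" "('v,'e) obj"

record 'a bsg =
  b00 :: "'a set"
  b01 :: "'a set"
  bE  :: "'a set"
  br  :: "'a \<Rightarrow> 'a"
  bs  :: "'a \<Rightarrow> 'a"
  bC  :: "'a \<Rightarrow> 'a set set"

definition step_verts :: "('v,'e) obj bsg \<Rightarrow> ('v,'e) obj set" where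
  "step_verts G = {Vx u S | u S. u \<in> b00 G \<and> fset S \<subseteq> \<Union>(bC G u) \<and>
                      (\<forall>X\<in>bC G u. \<exists>!x. x \<in> fset S \<inter> X)}"

definition step_edges :: "('v,'e) obj bsg \<Rightarrow> ('v,'e) obj set" where
  "step_edges G = {Ex (Vx u S) x | u S x. Vx u S \<in> step_verts G \<and> x \<in> fset S}"

definition step :: "('v,'e) obj bsg \<Rightarrow> ('v,'e) obj bsg" where
  "step G = \<lparr> b00 = b01 G,
              b01 = step_verts G,
              bE  = step_edges G,
              br  = (\<lambda>e. case e of Ex w x \<Rightarrow> bs G x | _ \<Rightarrow> undefined),
              bs  = (\<lambda>e. case e of Ex w x \<Rightarrow> w | _ \<Rightarrow> undefined),
              bC  = (\<lambda>v. if v \<in> b01 G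
                         then {{Ex w x | w. Ex w x \<in> step_edges G} | x. x \<in> bE G \<and> bs G x = v}
                         else {}) \<rparr>"

definition level0 ::
  "'v set \<Rightarrow> 'v set \<Rightarrow> 'e set \<Rightarrow> ('e \<Rightarrow> 'v) \<Rightarrow> ('e \<Rightarrow> 'v) \<Rightarrow> ('v \<Rightarrow> 'e set set) \<Rightarrow> ('v,'e) obj bsg"
  where
  "level0 V00 V01 Ed r s C = \<lparr> b00 = V0 ` V00, b01 = V0 ` V01, bE = E0 ` Ed,
      br = (\<lambda>e. case e of E0 x \<Rightarrow> V0 (r x) | _ \<Rightarrow> undefined),
      bs = (\<lambda>e. case e of E0 x \<Rightarrow> V0 (s x) | _ \<Rightarrow> undefined),
      bC = (\<lambda>v. case v of V0 u \<Rightarrow> (if u \<in> V00 then image E0 ` C u else {}) | _ \<Rightarrow> {}) \<rparr>"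

definition level ::
  "'v set \<Rightarrow> 'v set \<Rightarrow> 'e set \<Rightarrow> ('e \<Rightarrow> 'v) \<Rightarrow> ('e \<Rightarrow> 'v) \<Rightarrow> ('v \<Rightarrow> 'e set set) \<Rightarrow> nat \<Rightarrow> ('v,'e) obj bsg"
  where "level V00 V01 Ed r s C n = (step ^^ n) (level0 V00 V01 Ed r s C)"

text \<open>(F_infinity, D^infinity): union of the E_n glued along E_n^{0,1} = E_{n+1}^{0,0};
  range/source of an edge are those of the level it lives in, and
  D^infinity_v = C^n_v for v in E_n^{0,0}.\<close>
definition Finf ::
  "'v set \<Rightarrow> 'v set \<Rightarrow> 'e set \<Rightarrow> ('e \<Rightarrow> 'v) \<Rightarrow> ('e \<Rightarrow> 'v) \<Rightarrow> ('v \<Rightarrow> 'e set set) \<Rightarrow> ('v,'e) obj sgraph"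
  where
  "Finf V00 V01 Ed r s C =
     (let L = level V00 V01 Ed r s C in
      \<lparr> verts = (\<Union>n. b00 (L n) \<union> b01 (L n)),
        edges = (\<Union>n. bE (L n)),
        rng = (\<lambda>e. br (L (LEAST n. e \<in> bE (L n))) e),
        src = (\<lambda>e. bs (L (LEAST n. e \<in> bE (L n))) e),
        sepn = (\<lambda>v. if (\<exists>n. v \<in> b00 (L n))
                    then bC (L (LEAST n. v \<in> b00 (L n))) v else {}) \<rparr>)"

end

theory Submission
  imports Defs
begin


fun dep :: "'v set \<Rightarrow> ('v,'e) obj \<Rightarrow> nat" where
  "dep A (V0 w) = (if w \<in> A then 0 else 1)"
| "dep A (Vx u S) = dep A u + 2"
| "dep A (E0 _) = 0"
| "dep A (Ex _ _) = 0"

fun edep :: "'v set \<Rightarrow> ('v,'e) obj \<Rightarrow> nat" where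
  "edep A (Ex w x) = dep A w - 1"
| "edep A _ = 0"

definition Inv :: "('v,'e) obj bsg \<Rightarrow> bool" where
 "Inv G \<longleftrightarrow> finite (b00 G) \<and> finite (b01 G) \<and> finite (bE G) \<and>
   (\<forall>u\<in>b00 G. finite (bC G u) \<and> (\<forall>X\<in>bC G u. X \<noteq> {}) \<and>
      (\<forall>X\<in>bC G u. \<forall>Y\<in>bC G u. X \<noteq> Y \<longrightarrow> X \<inter> Y = {}) \<and> \<Union>(bC G u) \<subseteq> bE G) \<and>
   (\<forall>e\<in>bE G. br G e \<in> b00 G \<and> bs G e \<in> b01 G \<and> e \<in> \<Union>(bC G (br G e)))"

lemma step_simps[simp]:
  "b00 (step G) = b01 G" "b01 (step G) = step_verts G" "bE (step G) = step_edges G"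
  "br (step G) (Ex w x) = bs G x" "bs (step G) (Ex w x) = w"
  "bC (step G) v = (if v \<in> b01 G
                         then {{Ex w x | w. Ex w x \<in> step_edges G} | x. x \<in> bE G \<and> bs G x = v}
                         else {})"
  by (simp_all add: step_def)

lemma L_Suc[simp]: "level V00 V01 Ed r s C (Suc n) = step (level V00 V01 Ed r s C n)"
  by (simp add: level_def)
lemma L_0[simp]: "level V00 V01 Ed r s C 0 = level0 V00 V01 Ed r s C"
  by (simp add: level_def)

lemma choice_vert:
  assumes "u \<in> b00 G" "finite (bC G u)"
    "\<forall>X\<in>bC G u. \<forall>Y\<in>bC G u. X \<noteq> Y \<longrightarrow> X \<inter> Y = {}"
    "\<forall>X\<in>bC G u. g X \<in> X"
  shows "Vx u (Abs_fset (g ` bC G u)) \<in> step_verts G"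
    and "fset (Abs_fset (g ` bC G u)) = g ` bC G u"
proof -
  show f: "fset (Abs_fset (g ` bC G u)) = g ` bC G u"
    using assms(2) by (simp add: Abs_fset_inverse)
  have u: "\<forall>X\<in>bC G u. \<exists>!x. x \<in> g ` bC G u \<inter> X"
  proof
    fix X assume X: "X \<in> bC G u"
    show "\<exists>!x. x \<in> g ` bC G u \<inter> X"
    proof (rule ex1I[of _ "g X"])
      show "g X \<in> g ` bC G u \<inter> X" using X assms(4) by auto
    next
      fix y assume "y \<in> g ` bC G u \<inter> X"
      then obtain X' where X': "X' \<in> bC G u" "y = g X'" "y \<in> X" by auto
      then have "X' = X" using assms(3,4) X by blast
      then show "y = g X" using X' by simp
    qed
  qed
  have sub: "g ` bC G u \<subseteq> \<Union>(bC G u)" using assms(4) by auto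
  show "Vx u (Abs_fset (g ` bC G u)) \<in> step_verts G"
    unfolding step_verts_def using f u sub assms(1) by auto
qed

lemma finite_fsets: "finite A \<Longrightarrow> finite {S. fset S \<subseteq> A}"
proof -
  assume "finite A"
  have "{S. fset S \<subseteq> A} \<subseteq> Abs_fset ` Pow A"
  proof
    fix S assume "S \<in> {S. fset S \<subseteq> A}"
    then have "fset S \<in> Pow A" by simp
    moreover have "S = Abs_fset (fset S)" by (simp add: fset_inverse)
    ultimately show "S \<in> Abs_fset ` Pow A" by blast
  qed
  then show ?thesis using \<open>finite A\<close> finite_subset by blast
qed

lemma InvD:
  assumes "Inv G"
  shows "finite (b00 G)" "finite (b01 G)" "finite (bE G)"
    "\<And>u. u \<in> b00 G \<Longrightarrow> finite (bC G u)"
    "\<And>u. u \<in> b00 G \<Longrightarrow> \<forall>X\<in>bC G u. X \<noteq> {}"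
    "\<And>u. u \<in> b00 G \<Longrightarrow> \<forall>X\<in>bC G u. \<forall>Y\<in>bC G u. X \<noteq> Y \<longrightarrow> X \<inter> Y = {}"
    "\<And>u. u \<in> b00 G \<Longrightarrow> \<Union>(bC G u) \<subseteq> bE G"
    "\<And>e. e \<in> bE G \<Longrightarrow> br G e \<in> b00 G"
    "\<And>e. e \<in> bE G \<Longrightarrow> bs G e \<in> b01 G"
    "\<And>e. e \<in> bE G \<Longrightarrow> e \<in> \<Union>(bC G (br G e))"
proof -
  have I: "finite (b00 G) \<and> finite (b01 G) \<and> finite (bE G) \<and> (\<forall>u\<in>b00 G. finite (bC G u) \<and> (\<forall>X\<in>bC G u. X \<noteq> {}) \<and>
      (\<forall>X\<in>bC G u. \<forall>Y\<in>bC G u. X \<noteq> Y \<longrightarrow> X \<inter> Y = {}) \<and> \<Union>(bC G u) \<subseteq> bE G) \<and>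
   (\<forall>e\<in>bE G. br G e \<in> b00 G \<and> bs G e \<in> b01 G \<and> e \<in> \<Union>(bC G (br G e)))"
    using assms unfolding Inv_def .
  from I obtain A: "finite (b00 G)" "finite (b01 G)" "finite (bE G)"
   and B: "\<forall>u\<in>b00 G. finite (bC G u) \<and> (\<forall>X\<in>bC G u. X \<noteq> {}) \<and>
      (\<forall>X\<in>bC G u. \<forall>Y\<in>bC G u. X \<noteq> Y \<longrightarrow> X \<inter> Y = {}) \<and> \<Union>(bC G u) \<subseteq> bE G"
   and C: "\<forall>e\<in>bE G. br G e \<in> b00 G \<and> bs G e \<in> b01 G \<and> e \<in> \<Union>(bC G (br G e))"
    by (elim conjE) (rule that)
  show "finite (b00 G)" "finite (b01 G)" "finite (bE G)" by (fact A)+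
  show "finite (bC G u)" if "u \<in> b00 G" for u using bspec[OF B that] by (elim conjE)
  show "\<forall>X\<in>bC G u. X \<noteq> {}" if "u \<in> b00 G" for u using bspec[OF B that] by (elim conjE)
  show "\<forall>X\<in>bC G u. \<forall>Y\<in>bC G u. X \<noteq> Y \<longrightarrow> X \<inter> Y = {}" if "u \<in> b00 G" for u using bspec[OF B that] by (elim conjE)
  show "\<Union>(bC G u) \<subseteq> bE G" if "u \<in> b00 G" for u using bspec[OF B that] by (elim conjE)
  show "br G e \<in> b00 G" if "e \<in> bE G" for e using bspec[OF C that] by (elim conjE)
  show "bs G e \<in> b01 G" if "e \<in> bE G" for e using bspec[OF C that] by (elim conjE)
  show "e \<in> \<Union>(bC G (br G e))" if "e \<in> bE G" for e using bspec[OF C that] by (elim conjE)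
qed

lemma Inv_step: assumes "Inv G" shows "Inv (step G)"
proof -
  note fin = InvD(1-3)[OF assms]
  have U: "\<And>u. u \<in> b00 G \<Longrightarrow> finite (bC G u) \<and> (\<forall>X\<in>bC G u. X \<noteq> {}) \<and>
      (\<forall>X\<in>bC G u. \<forall>Y\<in>bC G u. X \<noteq> Y \<longrightarrow> X \<inter> Y = {}) \<and> \<Union>(bC G u) \<subseteq> bE G"
    by (intro conjI InvD[OF assms])
  have E: "\<And>e. e \<in> bE G \<Longrightarrow> br G e \<in> b00 G \<and> bs G e \<in> b01 G \<and> e \<in> \<Union>(bC G (br G e))"
    by (intro conjI InvD[OF assms])
  have sv: "step_verts G \<subseteq> (\<lambda>(u,S). Vx u S) ` (b00 G \<times> {S. fset S \<subseteq> bE G})"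
  proof
    fix ob assume "ob \<in> step_verts G"
    then obtain u S where ob: "ob = Vx u S" "u \<in> b00 G" "fset S \<subseteq> \<Union>(bC G u)"
      by (auto simp: step_verts_def)
    moreover have "\<Union>(bC G u) \<subseteq> bE G" using U[OF ob(2)] by blast
    ultimately have "fset S \<subseteq> bE G" by blast
    then have "(u,S) \<in> b00 G \<times> {S. fset S \<subseteq> bE G}" using ob by simp
    then show "ob \<in> (\<lambda>(u,S). Vx u S) ` (b00 G \<times> {S. fset S \<subseteq> bE G})"
      unfolding ob(1) by (rule rev_image_eqI) simp
  qed
  have fsv: "finite (step_verts G)"
    by (rule finite_subset[OF sv]) (intro finite_imageI finite_cartesian_product fin finite_fsets)
  have se: "step_edges G \<subseteq> (\<lambda>(w,x). Ex w x) ` (step_verts G \<times> bE G)"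
  proof
    fix e assume "e \<in> step_edges G"
    then obtain u S x where e: "e = Ex (Vx u S) x" "Vx u S \<in> step_verts G" "x \<in> fset S"
      by (auto simp: step_edges_def)
    then have "u \<in> b00 G" "fset S \<subseteq> \<Union>(bC G u)" by (auto simp: step_verts_def)
    moreover have "\<Union>(bC G u) \<subseteq> bE G" using U[OF \<open>u \<in> b00 G\<close>] by blast
    ultimately have "x \<in> bE G" using e by blast
    then have "(Vx u S, x) \<in> step_verts G \<times> bE G" using e by simp
    then show "e \<in> (\<lambda>(w,x). Ex w x) ` (step_verts G \<times> bE G)"
      unfolding e(1) by (rule rev_image_eqI) simp
  qed
  have fse: "finite (step_edges G)"
    by (rule finite_subset[OF se]) (intro finite_imageI finite_cartesian_product fin fsv)
  have ne: "\<exists>w. Ex w x \<in> step_edges G" if x: "x \<in> bE G" for x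
  proof -
    let ?u = "br G x"
    from E[OF x] obtain X0 where X0: "X0 \<in> bC G ?u" "x \<in> X0" "?u \<in> b00 G" by auto
    define g where "g X = (if X = X0 then x else (SOME y. y \<in> X))" for X
    have g: "\<forall>X\<in>bC G ?u. g X \<in> X"
    proof
      fix X assume X: "X \<in> bC G ?u"
      show "g X \<in> X"
      proof (cases "X = X0")
        case True then show ?thesis using X0 by (simp add: g_def)
      next
        case False
        have "X \<noteq> {}" using U[OF X0(3)] X by blast
        then show ?thesis using False by (simp add: g_def some_in_eq)
      qed
    qed
    have fu: "finite (bC G ?u)" and du: "\<forall>X\<in>bC G ?u. \<forall>Y\<in>bC G ?u. X \<noteq> Y \<longrightarrow> X \<inter> Y = {}"
      using U[OF X0(3)] by blast+
    note c = choice_vert[OF X0(3) fu du g]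
    have "g X0 = x" by (simp add: g_def)
    then have "x \<in> g ` bC G ?u" using X0(1) by (metis imageI)
    then have "x \<in> fset (Abs_fset (g ` bC G ?u))" using c(2) by simp
    then have "Ex (Vx ?u (Abs_fset (g ` bC G ?u))) x \<in> step_edges G"
      unfolding step_edges_def using c(1) by blast
    then show ?thesis by blast
  qed
  show ?thesis
    unfolding Inv_def
  proof (intro conjI)
    show "finite (b00 (step G))" "finite (b01 (step G))" "finite (bE (step G))"
      using fin fsv fse by auto
  next
    show "\<forall>u\<in>b00 (step G). finite (bC (step G) u) \<and> (\<forall>X\<in>bC (step G) u. X \<noteq> {}) \<and>
      (\<forall>X\<in>bC (step G) u. \<forall>Y\<in>bC (step G) u. X \<noteq> Y \<longrightarrow> X \<inter> Y = {}) \<and> \<Union>(bC (step G) u) \<subseteq> bE (step G)"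
    proof
      fix u assume u: "u \<in> b00 (step G)"
      then have u': "u \<in> b01 G" by simp
      have 1: "finite (bC (step G) u)" using u' fin by auto
      have 2: "\<forall>X\<in>bC (step G) u. X \<noteq> {}" using u' ne E by fastforce
      have 3: "\<forall>X\<in>bC (step G) u. \<forall>Y\<in>bC (step G) u. X \<noteq> Y \<longrightarrow> X \<inter> Y = {}" using u' by auto
      have 4: "\<Union>(bC (step G) u) \<subseteq> bE (step G)" using u' by auto
      show "finite (bC (step G) u) \<and> (\<forall>X\<in>bC (step G) u. X \<noteq> {}) \<and>
      (\<forall>X\<in>bC (step G) u. \<forall>Y\<in>bC (step G) u. X \<noteq> Y \<longrightarrow> X \<inter> Y = {}) \<and> \<Union>(bC (step G) u) \<subseteq> bE (step G)"
        using 1 2 3 4 by blast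
    qed
  next
    show "\<forall>e\<in>bE (step G). br (step G) e \<in> b00 (step G) \<and> bs (step G) e \<in> b01 (step G) \<and> e \<in> \<Union>(bC (step G) (br (step G) e))"
    proof
      fix e assume eE: "e \<in> bE (step G)"
      then obtain u S x where e: "e = Ex (Vx u S) x" "Vx u S \<in> step_verts G" "x \<in> fset S"
        by (auto simp: step_edges_def)
      then have "u \<in> b00 G" "fset S \<subseteq> \<Union>(bC G u)" by (auto simp: step_verts_def)
      then have x: "x \<in> bE G" using U e by blast
      have 1: "br (step G) e \<in> b00 (step G)" using e E[OF x] by simp
      have 2: "bs (step G) e \<in> b01 (step G)" using e by simp
      have eS: "e \<in> step_edges G" using eE by simp
      have XX: "{Ex w x | w. Ex w x \<in> step_edges G} \<in> bC (step G) (bs G x)" using x E[OF x] by auto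
      have "e \<in> {Ex w x | w. Ex w x \<in> step_edges G}" using e eS by auto
      then have 3: "e \<in> \<Union>(bC (step G) (br (step G) e))" using XX e E[OF x] by auto
      show "br (step G) e \<in> b00 (step G) \<and> bs (step G) e \<in> b01 (step G) \<and> e \<in> \<Union>(bC (step G) (br (step G) e))"
        using 1 2 3 by blast
    qed
  qed
qed



lemma level0_simps[simp]:
  "b00 (level0 V00 V01 Ed r s C) = V0 ` V00" "b01 (level0 V00 V01 Ed r s C) = V0 ` V01"
  "bE (level0 V00 V01 Ed r s C) = E0 ` Ed"
  "br (level0 V00 V01 Ed r s C) (E0 x) = V0 (r x)" "bs (level0 V00 V01 Ed r s C) (E0 x) = V0 (s x)"
  "bC (level0 V00 V01 Ed r s C) (V0 u) = (if u \<in> V00 then image E0 ` C u else {})"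
  by (simp_all add: level0_def)

lemma fbD:
  assumes fb: "fin_bipartite_sep_graph V00 V01 Ed r s C"
  shows "finite V00" "finite V01" "finite Ed" "V00 \<inter> V01 = {}" "r ` Ed = V00" "s ` Ed = V01"
    "\<And>v X. v \<in> V00 \<union> V01 \<Longrightarrow> X \<in> C v \<Longrightarrow> X \<noteq> {}"
    "\<And>v. v \<in> V00 \<union> V01 \<Longrightarrow> \<Union>(C v) = {e\<in>Ed. r e = v}"
    "\<And>v X Y. v \<in> V00 \<union> V01 \<Longrightarrow> X \<in> C v \<Longrightarrow> Y \<in> C v \<Longrightarrow> X \<noteq> Y \<Longrightarrow> X \<inter> Y = {}"
proof -
  from fb obtain A: "finite V00" "finite V01" "finite Ed" "V00 \<inter> V01 = {}" "r ` Ed = V00" "s ` Ed = V01"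
    and B: "\<forall>v\<in>V00 \<union> V01.
        (\<forall>X\<in>C v. X \<noteq> {}) \<and>
        \<Union>(C v) = {e\<in>Ed. r e = v} \<and>
        (\<forall>X\<in>C v. \<forall>Y\<in>C v. X \<noteq> Y \<longrightarrow> X \<inter> Y = {})"
    unfolding fin_bipartite_sep_graph_def by (elim conjE) (rule that)
  show "finite V00" "finite V01" "finite Ed" "V00 \<inter> V01 = {}" "r ` Ed = V00" "s ` Ed = V01" by (fact A)+
  show "X \<noteq> {}" if "v \<in> V00 \<union> V01" "X \<in> C v" for v X
    using bspec[OF B that(1)] that(2) by (elim conjE) (erule bspec)
  show "\<Union>(C v) = {e\<in>Ed. r e = v}" if "v \<in> V00 \<union> V01" for v
    using bspec[OF B that(1)] by (elim conjE)
  show "X \<inter> Y = {}" if "v \<in> V00 \<union> V01" "X \<in> C v" "Y \<in> C v" "X \<noteq> Y" for v X Y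
    using bspec[OF B that(1)] that(2-4) by (elim conjE) blast
qed

lemma Inv_level0:
  assumes fb: "fin_bipartite_sep_graph V00 V01 Ed r s C"
  shows "Inv (level0 V00 V01 Ed r s C)"
proof -
  note f = fbD(1-6)[OF fb]
  note P1 = fbD(7)[OF fb] and P2 = fbD(8)[OF fb] and P3 = fbD(9)[OF fb]
  show ?thesis
    unfolding Inv_def
  proof (intro conjI)
    show "finite (b00 (level0 V00 V01 Ed r s C))" "finite (b01 (level0 V00 V01 Ed r s C))"
      "finite (bE (level0 V00 V01 Ed r s C))" using f by simp_all
  next
    show "\<forall>u\<in>b00 (level0 V00 V01 Ed r s C). finite (bC (level0 V00 V01 Ed r s C) u) \<and>
      (\<forall>X\<in>bC (level0 V00 V01 Ed r s C) u. X \<noteq> {}) \<and>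
      (\<forall>X\<in>bC (level0 V00 V01 Ed r s C) u. \<forall>Y\<in>bC (level0 V00 V01 Ed r s C) u. X \<noteq> Y \<longrightarrow> X \<inter> Y = {}) \<and>
      \<Union>(bC (level0 V00 V01 Ed r s C) u) \<subseteq> bE (level0 V00 V01 Ed r s C)"
    proof
      fix u assume "u \<in> b00 (level0 V00 V01 Ed r s C)"
      then obtain w where u: "u = V0 w" "w \<in> V00" by auto
      have w: "w \<in> V00 \<union> V01" using u by simp
      have "C w \<subseteq> Pow {e\<in>Ed. r e = w}" using P2[OF w] by blast
      moreover have "finite {e\<in>Ed. r e = w}" using f(3) by (rule finite_subset[rotated]) auto
      ultimately have fC: "finite (C w)" using finite_subset by blast
      have 1: "finite (bC (level0 V00 V01 Ed r s C) u)" using u fC by simp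
      have 2: "\<forall>X\<in>bC (level0 V00 V01 Ed r s C) u. X \<noteq> {}" using u P1[OF w] by auto
      have 3: "\<forall>X\<in>bC (level0 V00 V01 Ed r s C) u. \<forall>Y\<in>bC (level0 V00 V01 Ed r s C) u. X \<noteq> Y \<longrightarrow> X \<inter> Y = {}"
        using u P3[OF w] by auto
      have 4: "\<Union>(bC (level0 V00 V01 Ed r s C) u) \<subseteq> bE (level0 V00 V01 Ed r s C)"
        using u P2[OF w] by auto
      show "finite (bC (level0 V00 V01 Ed r s C) u) \<and>
      (\<forall>X\<in>bC (level0 V00 V01 Ed r s C) u. X \<noteq> {}) \<and>
      (\<forall>X\<in>bC (level0 V00 V01 Ed r s C) u. \<forall>Y\<in>bC (level0 V00 V01 Ed r s C) u. X \<noteq> Y \<longrightarrow> X \<inter> Y = {}) \<and>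
      \<Union>(bC (level0 V00 V01 Ed r s C) u) \<subseteq> bE (level0 V00 V01 Ed r s C)"
        using 1 2 3 4 by (intro conjI)
    qed
  next
    show "\<forall>e\<in>bE (level0 V00 V01 Ed r s C). br (level0 V00 V01 Ed r s C) e \<in> b00 (level0 V00 V01 Ed r s C) \<and>
       bs (level0 V00 V01 Ed r s C) e \<in> b01 (level0 V00 V01 Ed r s C) \<and>
       e \<in> \<Union>(bC (level0 V00 V01 Ed r s C) (br (level0 V00 V01 Ed r s C) e))"
    proof
      fix e assume "e \<in> bE (level0 V00 V01 Ed r s C)"
      then obtain y where e: "e = E0 y" "y \<in> Ed" by auto
      have ry: "r y \<in> V00" using f(5) e by blast
      have sy: "s y \<in> V01" using f(6) e by blast
      have "y \<in> \<Union>(C (r y))" using P2[of "r y"] ry e by auto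
      then have 3: "e \<in> \<Union>(bC (level0 V00 V01 Ed r s C) (br (level0 V00 V01 Ed r s C) e))"
        using e ry by auto
      show "br (level0 V00 V01 Ed r s C) e \<in> b00 (level0 V00 V01 Ed r s C) \<and>
       bs (level0 V00 V01 Ed r s C) e \<in> b01 (level0 V00 V01 Ed r s C) \<and>
       e \<in> \<Union>(bC (level0 V00 V01 Ed r s C) (br (level0 V00 V01 Ed r s C) e))"
        using e ry sy 3 by simp
    qed
  qed
qed

lemma step_verts_uniq:
  assumes "Vx u S \<in> step_verts G" "X' \<in> bC G u" "p \<in> fset S" "q \<in> fset S" "p \<in> X'" "q \<in> X'"
  shows "p = q"
proof -
  have "\<exists>!x. x \<in> fset S \<inter> X'" using assms(1,2) unfolding step_verts_def by auto
  then show ?thesis using assms(3-6) by blast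
qed

lemma step_verts_D:
  assumes "Vx u S \<in> step_verts G"
  shows "u \<in> b00 G" "fset S \<subseteq> \<Union>(bC G u)"
  using assms unfolding step_verts_def by auto

context
  fixes V00 :: "'v set" and V01 :: "'v set" and Ed :: "'e set" and r s :: "'e \<Rightarrow> 'v"
    and C :: "'v \<Rightarrow> 'e set set"
  assumes fb: "fin_bipartite_sep_graph V00 V01 Ed r s C"
begin

abbreviation "L \<equiv> level V00 V01 Ed r s C"
abbreviation "F \<equiv> Finf V00 V01 Ed r s C"

lemma InvL: "Inv (L n)"
  by (induction n) (simp_all add: Inv_level0[OF fb] Inv_step)

lemma dep_b00: "x \<in> b00 (L n) \<Longrightarrow> dep V00 x = n"
proof -
  have "(\<forall>x\<in>b00 (L n). dep V00 x = n) \<and> (\<forall>x\<in>b00 (L (Suc n)). dep V00 x = Suc n)"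
  proof (induction n)
    case 0
    have d: "V00 \<inter> V01 = {}" using fbD(4)[OF fb] .
    then show ?case by auto
  next
    case (Suc n)
    have "\<forall>x\<in>b00 (L (Suc (Suc n))). dep V00 x = Suc (Suc n)"
    proof
      fix x assume "x \<in> b00 (L (Suc (Suc n)))"
      then have "x \<in> step_verts (L n)" by simp
      then obtain u S where "x = Vx u S" "u \<in> b00 (L n)" by (auto simp: step_verts_def)
      then show "dep V00 x = Suc (Suc n)" using Suc.IH by simp
    qed
    then show ?case using Suc.IH by simp
  qed
  then show "x \<in> b00 (L n) \<Longrightarrow> dep V00 x = n" by blast
qed

lemma lev_uniq: "x \<in> b00 (L i) \<Longrightarrow> x \<in> b00 (L j) \<Longrightarrow> i = j"
  using dep_b00 by metis

lemma edep_bE: "e \<in> bE (L n) \<Longrightarrow> edep V00 e = n"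
proof (cases n)
  case 0
  assume "e \<in> bE (L n)" then show ?thesis using 0 by auto
next
  case (Suc k)
  assume "e \<in> bE (L n)"
  then have "e \<in> step_edges (L k)" using Suc by simp
  then obtain u S x where e: "e = Ex (Vx u S) x" "Vx u S \<in> step_verts (L k)"
    by (auto simp: step_edges_def)
  then have "Vx u S \<in> b00 (L (Suc (Suc k)))" by simp
  then have "dep V00 (Vx u S) = Suc (Suc k)" by (rule dep_b00)
  then show ?thesis using e Suc by simp
qed

lemma F_verts: "verts F = (\<Union>n. b00 (L n))"
proof -
  have "verts F = (\<Union>n. b00 (L n) \<union> b01 (L n))" by (simp add: Finf_def Let_def)
  also have "\<dots> = (\<Union>n. b00 (L n))"
  proof
    show "(\<Union>n. b00 (L n) \<union> b01 (L n)) \<subseteq> (\<Union>n. b00 (L n))"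
    proof
      fix x assume "x \<in> (\<Union>n. b00 (L n) \<union> b01 (L n))"
      then obtain n where "x \<in> b00 (L n) \<or> x \<in> b01 (L n)" by blast
      then have "x \<in> b00 (L n) \<or> x \<in> b00 (L (Suc n))" by simp
      then show "x \<in> (\<Union>n. b00 (L n))" by blast
    qed
  qed blast
  finally show ?thesis .
qed

lemma F_edges: "edges F = (\<Union>n. bE (L n))"
  by (simp add: Finf_def Let_def)

lemma least_e: assumes e: "e \<in> bE (L n)" shows "(LEAST k. e \<in> bE (L k)) = n"
proof (rule Least_equality)
  show "e \<in> bE (L n)" by (fact e)
  fix y assume "e \<in> bE (L y)"
  then have "edep V00 e = y" by (rule edep_bE)
  moreover have "edep V00 e = n" by (rule edep_bE[OF e])
  ultimately show "n \<le> y" by simp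
qed

lemma least_v: "x \<in> b00 (L n) \<Longrightarrow> (LEAST k. x \<in> b00 (L k)) = n"
  by (rule Least_equality) (use lev_uniq in fastforce)+

lemma F_rng: "e \<in> bE (L n) \<Longrightarrow> rng F e = br (L n) e"
  using least_e by (simp add: Finf_def Let_def)

lemma F_src: "e \<in> bE (L n) \<Longrightarrow> src F e = bs (L n) e"
  using least_e by (simp add: Finf_def Let_def)

lemma F_sepn: "x \<in> b00 (L n) \<Longrightarrow> sepn F x = bC (L n) x"
proof -
  assume x: "x \<in> b00 (L n)"
  then have "\<exists>n. x \<in> b00 (L n)" by blast
  then show ?thesis using least_v[OF x] by (simp add: Finf_def Let_def)
qed

lemma F_sepn_empty: "(\<forall>n. x \<notin> b00 (L n)) \<Longrightarrow> sepn F x = {}"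
  by (simp add: Finf_def Let_def)

lemma slot_vert:
  assumes x: "x \<in> bE (L n)" and h: "\<forall>X'\<in>bC (L n) (br (L n) x). h X' \<in> X'"
  shows "\<exists>S. Vx (br (L n) x) S \<in> step_verts (L n) \<and> x \<in> fset S \<and>
     (\<forall>z\<in>fset S. z = x \<or> (\<exists>X'\<in>bC (L n) (br (L n) x). z = h X')) \<and>
     (\<forall>X'\<in>bC (L n) (br (L n) x). x \<notin> X' \<longrightarrow> h X' \<in> fset S)"
proof -
  let ?u = "br (L n) x"
  note I = InvD[OF InvL[of n]]
  have u: "?u \<in> b00 (L n)" using I(8)[OF x] .
  obtain X0 where X0: "X0 \<in> bC (L n) ?u" "x \<in> X0" using I(10)[OF x] by blast
  define g where "g X' = (if x \<in> X' then x else h X')" for X'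
  have g: "\<forall>X'\<in>bC (L n) ?u. g X' \<in> X'" using h by (simp add: g_def)
  note c = choice_vert[OF u I(4)[OF u] I(6)[OF u] g]
  have "g X0 = x" using X0 by (simp add: g_def)
  then have "x \<in> g ` bC (L n) ?u" using X0(1) by (metis imageI)
  then have 1: "x \<in> fset (Abs_fset (g ` bC (L n) ?u))" using c(2) by simp
  have 2: "\<forall>z\<in>fset (Abs_fset (g ` bC (L n) ?u)). z = x \<or> (\<exists>X'\<in>bC (L n) ?u. z = h X')"
    unfolding c(2) g_def by auto
  have 3: "\<forall>X'\<in>bC (L n) ?u. x \<notin> X' \<longrightarrow> h X' \<in> fset (Abs_fset (g ` bC (L n) ?u))"
    unfolding c(2) g_def by (auto intro!: image_eqI)
  show ?thesis using c(1) 1 2 3 by blast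
qed

end



primrec Hs :: "(nat \<Rightarrow> ('v,'e) obj bsg) \<Rightarrow> nat \<Rightarrow> ('v,'e) obj \<Rightarrow> ('v,'e) obj \<Rightarrow> ('v,'e) obj \<Rightarrow> nat \<Rightarrow> ('v,'e) obj set" where
  "Hs LL n0 v a b 0 = {Vx u S | u S. Vx u S \<in> step_verts (LL n0) \<and> u = v \<and> a \<in> fset S \<and> b \<in> fset S}"
| "Hs LL n0 v a b (Suc m) = {Vx u S | u S. Vx u S \<in> step_verts (LL (Suc (n0 + m))) \<and>
      (\<exists>z\<in>fset S. bs (LL (Suc (n0 + m))) z \<in> Hs LL n0 v a b m)}"

context
  fixes V00 :: "'v set" and V01 :: "'v set" and Ed :: "'e set" and r s :: "'e \<Rightarrow> 'v"
    and C :: "'v \<Rightarrow> 'e set set"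
  assumes fb: "fin_bipartite_sep_graph V00 V01 Ed r s C"
  fixes n0 :: nat and v :: "('v,'e) obj" and X Y :: "('v,'e) obj set" and a a' b b' :: "('v,'e) obj"
  assumes v: "v \<in> b00 (level V00 V01 Ed r s C n0)"
    and X: "X \<in> bC (level V00 V01 Ed r s C n0) v" and Y: "Y \<in> bC (level V00 V01 Ed r s C n0) v"
    and XY: "X \<noteq> Y" and aX: "a \<in> X" "a' \<in> X" "a \<noteq> a'" and bY: "b \<in> Y" "b' \<in> Y" "b \<noteq> b'"
begin

abbreviation "LL \<equiv> level V00 V01 Ed r s C"
abbreviation "HH \<equiv> Hs LL n0 v a b"

lemma Hs_sub: "HH m \<subseteq> step_verts (LL (n0 + m))"
  by (cases m) auto

lemma Hs_lev: "x \<in> HH m \<Longrightarrow> x \<in> b00 (LL (Suc (Suc (n0 + m))))"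
  using Hs_sub by auto

lemma Hs_uniq: "x \<in> HH m \<Longrightarrow> x \<in> b00 (LL k) \<Longrightarrow> k = Suc (Suc (n0 + m))"
  using Hs_lev lev_uniq[OF fb] by metis

lemma Hs_m_uniq: "x \<in> HH m \<Longrightarrow> x \<in> HH m' \<Longrightarrow> m = m'"
proof -
  assume "x \<in> HH m" "x \<in> HH m'"
  then have "Suc (Suc (n0 + m')) = Suc (Suc (n0 + m))" using Hs_uniq Hs_lev by metis
  then show "m = m'" by simp
qed

abbreviation "FF \<equiv> Finf V00 V01 Ed r s C"

lemma Zform: "w \<in> b01 (LL k) \<Longrightarrow> Z \<in> bC (LL (Suc k)) w \<Longrightarrow>
   \<exists>x. x \<in> bE (LL k) \<and> bs (LL k) x = w \<and> Z = {Ex o' x | o'. Ex o' x \<in> step_edges (LL k)}"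
  by auto

lemma Zsrc: "Z = {Ex o' x | o'. Ex o' x \<in> step_edges (LL k)} \<Longrightarrow> Vx u S \<in> step_verts (LL k) \<Longrightarrow>
   x \<in> fset S \<Longrightarrow> Ex (Vx u S) x \<in> Z \<and> bs (LL (Suc k)) (Ex (Vx u S) x) = Vx u S"
  by (auto simp: step_edges_def)

lemma sat: "w \<in> b01 (LL (n0+m)) \<Longrightarrow> Z \<in> bC (LL (Suc (n0+m))) w \<Longrightarrow>
   (\<forall>e\<in>Z. bs (LL (Suc (n0+m))) e \<in> HH m) \<Longrightarrow> (case m of 0 \<Rightarrow> False | Suc m' \<Rightarrow> w \<in> HH m')"
proof (induction m arbitrary: w Z)
  case 0
  have w0: "w \<in> b01 (LL n0)" using 0(1) by (simp only: add_0_right)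
  have Z0: "Z \<in> bC (LL (Suc n0)) w" using 0(2) by (simp only: add_0_right)
  from Zform[OF w0 Z0] obtain x where x: "x \<in> bE (LL n0)" "bs (LL n0) x = w"
    and Zx: "Z = {Ex o' x | o'. Ex o' x \<in> step_edges (LL n0)}" by auto
  let ?u = "br (LL n0) x"
  note I = InvD[OF InvL[OF fb, of n0]]
  have u0: "?u \<in> b00 (LL n0)" using I(8)[OF x(1)] .
  define h where "h X' = (if X' = Y then b' else if X' = X then a' else (SOME y. y \<in> X'))" for X'
  have h: "\<forall>X'\<in>bC (LL n0) ?u. h X' \<in> X'"
  proof
    fix X' assume X': "X' \<in> bC (LL n0) ?u"
    have "X' \<noteq> {}" using I(5)[OF u0] X' by blast
    then show "h X' \<in> X'" using aX bY by (simp add: h_def some_in_eq)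
  qed
  obtain S where S: "Vx ?u S \<in> step_verts (LL n0)" "x \<in> fset S"
    "\<forall>X'\<in>bC (LL n0) ?u. x \<notin> X' \<longrightarrow> h X' \<in> fset S"
    using slot_vert[OF fb x(1) h] by blast
  have "Ex (Vx ?u S) x \<in> Z \<and> bs (LL (Suc n0)) (Ex (Vx ?u S) x) = Vx ?u S"
    by (rule Zsrc[OF Zx S(1,2)])
  then have "Vx ?u S \<in> HH 0" using 0(3) by (metis add_0_right)
  then have uv: "?u = v" and ab: "a \<in> fset S" "b \<in> fset S" by auto
  show ?case
  proof (cases "x \<in> Y")
    case False
    have "h Y \<in> fset S" using S(3) Y uv False by simp
    then have "b' \<in> fset S" by (simp add: h_def)
    have "b = b'" by (rule step_verts_uniq[OF S(1) _ ab(2) \<open>b' \<in> fset S\<close> bY(1,2)]) (use Y uv in simp)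
    then show ?thesis using bY(3) by simp
  next
    case True
    have "X \<inter> Y = {}" using I(6)[OF v] X Y XY by blast
    then have "x \<notin> X" using True by blast
    then have "h X \<in> fset S" using S(3) X uv by simp
    then have "a' \<in> fset S" using XY by (simp add: h_def)
    have "a = a'" by (rule step_verts_uniq[OF S(1) _ ab(1) \<open>a' \<in> fset S\<close> aX(1,2)]) (use X uv in simp)
    then show ?thesis using aX(3) by simp
  qed
next
  case (Suc m')
  let ?k = "Suc (n0 + m')"
  have w: "w \<in> b01 (LL ?k)" using Suc.prems(1) by simp
  have Z: "Z \<in> bC (LL (Suc ?k)) w" using Suc.prems(2) by simp
  have Zs: "\<forall>e\<in>Z. bs (LL (Suc ?k)) e \<in> HH (Suc m')" using Suc.prems(3) by simp
  from Zform[OF w Z] obtain x where x: "x \<in> bE (LL ?k)" "bs (LL ?k) x = w"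
    and Zx: "Z = {Ex o' x | o'. Ex o' x \<in> step_edges (LL ?k)}" by auto
  let ?u = "br (LL ?k) x"
  note I = InvD[OF InvL[OF fb, of ?k]]
  have u0: "?u \<in> b00 (LL ?k)" using I(8)[OF x(1)] .
  have u0': "?u \<in> b01 (LL (n0 + m'))" using u0 by simp
  show ?case
  proof (rule ccontr)
    assume "\<not> ?case"
    then have wn: "w \<notin> HH m'" by simp
    have cl: "\<forall>X'\<in>bC (LL ?k) ?u. \<exists>z\<in>X'. bs (LL ?k) z \<notin> HH m'"
    proof (rule ballI, rule ccontr)
      fix X' assume X': "X' \<in> bC (LL ?k) ?u" and "\<not> (\<exists>z\<in>X'. bs (LL ?k) z \<notin> HH m')"
      then have all: "\<forall>e\<in>X'. bs (LL (Suc (n0 + m'))) e \<in> HH m'" by blast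
      have ih: "case m' of 0 \<Rightarrow> False | Suc m'' \<Rightarrow> ?u \<in> HH m''"
        by (rule Suc.IH[OF u0' _ all]) (use X' in simp)
      show False
      proof (cases m')
        case 0 then show False using ih by simp
      next
        case (Suc m'')
        have uH: "?u \<in> HH m''" using ih Suc by simp
        have "x \<in> step_edges (LL (Suc (n0 + m'')))" using x(1) Suc by simp
        then obtain u S z' where xe: "x = Ex (Vx u S) z'" "Vx u S \<in> step_verts (LL (Suc (n0 + m'')))" "z' \<in> fset S"
          by (auto simp: step_edges_def)
        have "bs (LL (Suc (n0 + m''))) z' = ?u" using xe Suc by simp
        then have VH: "Vx u S \<in> HH (Suc m'')" using xe uH Suc by auto
        have "bs (LL ?k) x = Vx u S" using xe Suc by simp
        then have wV: "w = Vx u S" using x(2) by simp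
        have "w \<in> HH (Suc m'')" using VH wV by (simp only:)
        then have "w \<in> HH m'" using Suc by (simp only:)
        then show False using wn by simp
      qed
    qed
    define h where "h X' = (SOME z. z \<in> X' \<and> bs (LL ?k) z \<notin> HH m')" for X'
    have h: "\<forall>X'\<in>bC (LL ?k) ?u. h X' \<in> X' \<and> bs (LL ?k) (h X') \<notin> HH m'"
    proof
      fix X' assume "X' \<in> bC (LL ?k) ?u"
      then have "\<exists>z. z \<in> X' \<and> bs (LL ?k) z \<notin> HH m'" using cl by blast
      then show "h X' \<in> X' \<and> bs (LL ?k) (h X') \<notin> HH m'" unfolding h_def by (rule someI_ex)
    qed
    have h1: "\<forall>X'\<in>bC (LL ?k) ?u. h X' \<in> X'" using h by blast
    obtain S where S: "Vx ?u S \<in> step_verts (LL ?k)" "x \<in> fset S"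
      "\<forall>z\<in>fset S. z = x \<or> (\<exists>X'\<in>bC (LL ?k) ?u. z = h X')"
      using slot_vert[OF fb x(1) h1] by blast
    have "Ex (Vx ?u S) x \<in> Z \<and> bs (LL (Suc ?k)) (Ex (Vx ?u S) x) = Vx ?u S"
      by (rule Zsrc[OF Zx S(1,2)])
    then have "Vx ?u S \<in> HH (Suc m')" using Zs by metis
    then obtain z where z: "z \<in> fset S" "bs (LL ?k) z \<in> HH m'" by auto
    show False
    proof (cases "z = x")
      case True then show False using z x(2) wn by simp
    next
      case False
      then obtain X' where "X' \<in> bC (LL ?k) ?u" "z = h X'" using S(3) z(1) by blast
      then show False using h z(2) by blast
    qed
  qed
qed

lemma H_sub: "(\<Union>m. HH m) \<subseteq> verts FF"
proof
  fix x assume "x \<in> (\<Union>m. HH m)"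
  then obtain m where "x \<in> HH m" by blast
  then have "x \<in> b00 (LL (Suc (Suc (n0 + m))))" by (rule Hs_lev)
  then have "x \<in> (\<Union>n. b00 (LL n))" by (rule UN_I[OF UNIV_I])
  then show "x \<in> verts FF" by (simp only: F_verts[OF fb])
qed

lemma H_hered: "hereditary FF (\<Union>m. HH m)"
  unfolding hereditary_def
proof (intro conjI ballI impI)
  show "(\<Union>m. HH m) \<subseteq> verts FF" by (rule H_sub)
next
  fix e assume eE: "e \<in> edges FF" and rH: "rng FF e \<in> (\<Union>m. HH m)"
  from eE obtain k where ek: "e \<in> bE (LL k)" using F_edges[OF fb] by blast
  from rH obtain m where rm: "rng FF e \<in> HH m" by blast
  have rr: "rng FF e = br (LL k) e" by (rule F_rng[OF fb ek])
  have "br (LL k) e \<in> b00 (LL k)" using InvD(8)[OF InvL[OF fb] ek] .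
  then have k: "k = Suc (Suc (n0 + m))" using Hs_uniq[of "rng FF e" m k] rm rr by simp
  then have "e \<in> step_edges (LL (Suc (n0 + m)))" using ek by simp
  then obtain u S z where e: "e = Ex (Vx u S) z" "Vx u S \<in> step_verts (LL (Suc (n0 + m)))" "z \<in> fset S"
    by (auto simp: step_edges_def)
  have "bs (LL (Suc (n0 + m))) z \<in> HH m" using rm rr k e by simp
  then have VH: "Vx u S \<in> HH (Suc m)" using e by auto
  have sr: "src FF e = Vx u S" using F_src[OF fb ek] k e by simp
  show "src FF e \<in> (\<Union>m. HH m)" unfolding sr using VH by (rule UN_I[OF UNIV_I])
qed

lemma H_sat: "saturated FF (\<Union>m. HH m)"
  unfolding saturated_def
proof (intro ballI impI)
  fix w Z assume wV: "w \<in> verts FF" and ZS: "Z \<in> sepn FF w" and sub: "src FF ` Z \<subseteq> (\<Union>m. HH m)"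
  from wV obtain k where wk: "w \<in> b00 (LL k)" using F_verts[OF fb] by blast
  have Z: "Z \<in> bC (LL k) w" using ZS F_sepn[OF fb wk] by simp
  note I = InvD[OF InvL[OF fb, of k]]
  have eZ: "\<And>e. e \<in> Z \<Longrightarrow> e \<in> bE (LL k)" using I(7)[OF wk] Z by blast
  have srcZ: "\<And>e. e \<in> Z \<Longrightarrow> src FF e = bs (LL k) e \<and> bs (LL k) e \<in> b00 (LL (Suc k))"
    using eZ F_src[OF fb] I(9) by simp
  show "w \<in> (\<Union>m. HH m)"
  proof (cases "k \<le> n0")
    case True
    have "Z \<noteq> {}" using I(5)[OF wk] Z by blast
    then obtain e where e: "e \<in> Z" by blast
    then obtain m where m: "src FF e \<in> HH m" using sub by blast
    have "src FF e \<in> b00 (LL (Suc k))" using srcZ[OF e] by simp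
    then have "Suc k = Suc (Suc (n0 + m))" by (rule Hs_uniq[OF m])
    then show ?thesis using True by simp
  next
    case False
    have "k = Suc (n0 + (k - Suc n0))" using False by simp
    then obtain j where kj: "k = Suc (n0 + j)" by blast
    have all: "\<forall>e\<in>Z. bs (LL (Suc (n0 + j))) e \<in> HH j"
    proof
      fix e assume e: "e \<in> Z"
      then obtain m where m: "src FF e \<in> HH m" using sub by blast
      have "src FF e \<in> b00 (LL (Suc k))" using srcZ[OF e] by simp
      then have "Suc k = Suc (Suc (n0 + m))" by (rule Hs_uniq[OF m])
      then have "m = j" using kj by simp
      then show "bs (LL (Suc (n0 + j))) e \<in> HH j" using m srcZ[OF e] kj by simp
    qed
    have w': "w \<in> b01 (LL (n0 + j))" using wk kj by simp
    have Z': "Z \<in> bC (LL (Suc (n0 + j))) w" using Z kj by simp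
    have "case j of 0 \<Rightarrow> False | Suc m' \<Rightarrow> w \<in> HH m'" by (rule sat[OF w' Z' all])
    then show ?thesis by (cases j) auto
  qed
qed

lemma H_ne: "(\<Union>m. HH m) \<noteq> {}"
proof -
  note I = InvD[OF InvL[OF fb, of n0]]
  define h where "h X' = (if X' = X then a else if X' = Y then b else (SOME y. y \<in> X'))" for X'
  have h: "\<forall>X'\<in>bC (LL n0) v. h X' \<in> X'"
  proof
    fix X' assume X': "X' \<in> bC (LL n0) v"
    have "X' \<noteq> {}" using I(5)[OF v] X' by blast
    then show "h X' \<in> X'" using aX bY by (simp add: h_def some_in_eq)
  qed
  note c = choice_vert[OF v I(4)[OF v] I(6)[OF v] h]
  have "a \<in> h ` bC (LL n0) v" by (rule rev_image_eqI[OF X]) (simp add: h_def)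
  moreover have "b \<in> h ` bC (LL n0) v" by (rule rev_image_eqI[OF Y]) (use XY in \<open>simp add: h_def\<close>)
  ultimately have "Vx v (Abs_fset (h ` bC (LL n0) v)) \<in> HH 0" using c by auto
  then show ?thesis by blast
qed

lemma v_notin: "v \<notin> (\<Union>m. HH m)"
proof
  assume "v \<in> (\<Union>m. HH m)"
  then obtain m where "v \<in> HH m" by blast
  then have "n0 = Suc (Suc (n0 + m))" using v by (rule Hs_uniq)
  then show False by simp
qed

lemma contra: "HS FF \<noteq> {{}, verts FF}"
proof
  assume eq: "HS FF = {{}, verts FF}"
  have "(\<Union>m. HH m) \<in> HS FF" unfolding HS_def by (intro CollectI conjI H_sub H_hered H_sat)
  then have "(\<Union>m. HH m) \<in> {{}, verts FF}" by (simp only: eq)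
  then have o: "(\<Union>m. HH m) = {} \<or> (\<Union>m. HH m) = verts FF" by simp
  have vv: "v \<in> verts FF" unfolding F_verts[OF fb] using v by (rule UN_I[OF UNIV_I])
  show False
  proof (cases "(\<Union>m. HH m) = {}")
    case True then show False using H_ne by simp
  next
    case False
    with o have "(\<Union>m. HH m) = verts FF" by blast
    then have "v \<in> (\<Union>m. HH m)" using vv by (simp only:)
    then show False using v_notin by simp
  qed
qed

end


theorem lemma8:
  fixes V00 V01 :: "'v set" and Ed :: "'e set" and r s :: "'e \<Rightarrow> 'v"
    and C :: "'v \<Rightarrow> 'e set set"
  assumes "fin_bipartite_sep_graph V00 V01 Ed r s C"
    and "HS (Finf V00 V01 Ed r s C) = {{}, verts (Finf V00 V01 Ed r s C)}"
  shows "\<forall>v\<in>verts (Finf V00 V01 Ed r s C).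
           \<forall>X\<in>sepn (Finf V00 V01 Ed r s C) v. \<forall>Y\<in>sepn (Finf V00 V01 Ed r s C) v.
             card X > 1 \<longrightarrow> card Y > 1 \<longrightarrow> X = Y"
proof (intro ballI impI)
  fix v X Y
  assume vV: "v \<in> verts (Finf V00 V01 Ed r s C)"
    and X: "X \<in> sepn (Finf V00 V01 Ed r s C) v" and Y: "Y \<in> sepn (Finf V00 V01 Ed r s C) v"
    and cX: "card X > 1" and cY: "card Y > 1"
  show "X = Y"
  proof (rule ccontr)
    assume XY: "X \<noteq> Y"
    have "\<exists>n. v \<in> b00 (level V00 V01 Ed r s C n)"
    proof (rule ccontr)
      assume "\<not> (\<exists>n. v \<in> b00 (level V00 V01 Ed r s C n))"
      then have "sepn (Finf V00 V01 Ed r s C) v = {}" using F_sepn_empty[OF assms(1)] by blast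
      then show False using X by simp
    qed
    then obtain n0 where n0: "v \<in> b00 (level V00 V01 Ed r s C n0)" by blast
    have X': "X \<in> bC (level V00 V01 Ed r s C n0) v" using X F_sepn[OF assms(1) n0] by simp
    have Y': "Y \<in> bC (level V00 V01 Ed r s C n0) v" using Y F_sepn[OF assms(1) n0] by simp
    have two: "\<exists>a\<in>Z. \<exists>a'\<in>Z. a \<noteq> a'" if "card Z > 1" for Z :: "('v,'e) obj set"
    proof (rule ccontr)
      assume "\<not> (\<exists>a\<in>Z. \<exists>a'\<in>Z. a \<noteq> a')"
      then have "\<forall>a\<in>Z. \<forall>a'\<in>Z. a = a'" by blast
      moreover have "finite Z" using that by (metis card.infinite not_less_zero)
      ultimately have "card Z \<le> Suc 0" by (simp add: card_le_Suc0_iff_eq)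
      then show False using that by simp
    qed
    obtain a a' where a: "a \<in> X" "a' \<in> X" "a \<noteq> a'" using two[OF cX] by blast
    obtain b b' where b: "b \<in> Y" "b' \<in> Y" "b \<noteq> b'" using two[OF cY] by blast
    show False using contra[OF assms(1) n0 X' Y' XY a b] assms(2) by simp
  qed
qed

end
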